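(* Let $m=2$ and let $n\ge 1$ be arbitrary. For every distribution $\mathcal{D}$ supported on $[0,1]$, the majority rule (which selects an alternative ranked first by at least as many voters as the other alternative, ties broken arbitrarily) is both an expected-distortion-maximizing rule and an expected-welfare-maximizing rule for $\mathcal{D}$.
   Context: There are $n$ voters $N=\{1,\dots,n\}$ and $m$ alternatives $A=\{1,\dots,m\}$. A preference profile $\sigma=(\sigma_1,\dots,\sigma_n)$ consists of a ranking (linear order) $\sigma_i$ of $A$ for each voter; position $1$ is the top. A (deterministic) voting rule $f$ maps each preference profile to an alternative $f(\sigma)\in A$. Given a distribution $\mathcal{D}$ and a profile $\sigma$, a random utility profile $u$ consistent with $\sigma$ is generated as follows: independently for each voter $i$, draw $m$ i.i.d. samples from $\mathcal{D}$ and assign them, from highest to lowest, to the alternatives in the order of $\sigma_i$ (the alternative in position $r$ gets the $r$-th largest sample). The social welfare of alternative $j$ is $\mathrm{sw}(j,u)=\sum_{i\in N}u_{ij}$; all expectations are over this random $u$. The distortion of alternative $j$ at $\sigma$ is the random variable $\mathrm{dist}(j,\sigma)=\mathrm{sw}(j,u)/\max_{k\in A}\mathrm{sw}(k,u)$. A rule is an expected-distortion-maximizing rule for $\mathcal{D}$ if for every profile $\sigma$ it selects an alternative maximizing $\mathbb{E}[\mathrm{dist}(j,\sigma)]$ over $j\in A$; it is an expected-welfare-maximizing rule for $\mathcal{D}$ if for every $\sigma$ it selects an alternative maximizing $\mathbb{E}[\mathrm{sw}(j,u)]$ over $j\in A$. *)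

theory Defs
  imports "HOL-Probability.Probability"
begin

text \<open>Voters are 1..n, alternatives are 1..m. A profile is given by
  sigma i j = position (1 = top) of alternative j in voter i's ranking;
  each sigma i restricted to {1..m} must be a bijection onto {1..m}.\<close>

definition is_profile :: "nat \<Rightarrow> nat \<Rightarrow> (nat \<Rightarrow> nat \<Rightarrow> nat) \<Rightarrow> bool" where
  "is_profile n m \<sigma> = (\<forall>i\<in>{1..n}. bij_betw (\<sigma> i) {1..m} {1..m})"

definition kth_largest :: "nat \<Rightarrow> (nat \<Rightarrow> real) \<Rightarrow> nat \<Rightarrow> real" where
  "kth_largest m x r = rev (sort (map x [1..<m+1])) ! (r - 1)"

text \<open>X (i,k) is the k-th sample drawn for voter i; alternative j in position
  sigma i j receives the (sigma i j)-th largest sample.\<close>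
definition utility :: "nat \<Rightarrow> (nat \<Rightarrow> nat \<Rightarrow> nat) \<Rightarrow> (nat \<times> nat \<Rightarrow> real) \<Rightarrow> nat \<Rightarrow> nat \<Rightarrow> real" where
  "utility m \<sigma> X i j = kth_largest m (\<lambda>k. X (i, k)) (\<sigma> i j)"

definition sw :: "nat \<Rightarrow> nat \<Rightarrow> (nat \<Rightarrow> nat \<Rightarrow> nat) \<Rightarrow> (nat \<times> nat \<Rightarrow> real) \<Rightarrow> nat \<Rightarrow> real" where
  "sw n m \<sigma> X j = (\<Sum>i\<in>{1..n}. utility m \<sigma> X i j)"

definition sample_space :: "real measure \<Rightarrow> nat \<Rightarrow> nat \<Rightarrow> (nat \<times> nat \<Rightarrow> real) measure" where
  "sample_space D n m = PiM ({1..n} \<times> {1..m}) (\<lambda>_. D)"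

definition exp_sw :: "real measure \<Rightarrow> nat \<Rightarrow> nat \<Rightarrow> (nat \<Rightarrow> nat \<Rightarrow> nat) \<Rightarrow> nat \<Rightarrow> real" where
  "exp_sw D n m \<sigma> j = (\<integral>X. sw n m \<sigma> X j \<partial>sample_space D n m)"

definition exp_dist :: "real measure \<Rightarrow> nat \<Rightarrow> nat \<Rightarrow> (nat \<Rightarrow> nat \<Rightarrow> nat) \<Rightarrow> nat \<Rightarrow> real" where
  "exp_dist D n m \<sigma> j =
     (\<integral>X. sw n m \<sigma> X j / (MAX k\<in>{1..m}. sw n m \<sigma> X k) \<partial>sample_space D n m)"

definition exp_distortion_maximizing ::
  "real measure \<Rightarrow> nat \<Rightarrow> nat \<Rightarrow> ((nat \<Rightarrow> nat \<Rightarrow> nat) \<Rightarrow> nat) \<Rightarrow> bool" where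
  "exp_distortion_maximizing D n m f =
     (\<forall>\<sigma>. is_profile n m \<sigma> \<longrightarrow> f \<sigma> \<in> {1..m} \<and>
        (\<forall>j\<in>{1..m}. exp_dist D n m \<sigma> j \<le> exp_dist D n m \<sigma> (f \<sigma>)))"

definition exp_welfare_maximizing ::
  "real measure \<Rightarrow> nat \<Rightarrow> nat \<Rightarrow> ((nat \<Rightarrow> nat \<Rightarrow> nat) \<Rightarrow> nat) \<Rightarrow> bool" where
  "exp_welfare_maximizing D n m f =
     (\<forall>\<sigma>. is_profile n m \<sigma> \<longrightarrow> f \<sigma> \<in> {1..m} \<and>
        (\<forall>j\<in>{1..m}. exp_sw D n m \<sigma> j \<le> exp_sw D n m \<sigma> (f \<sigma>)))"

definition is_majority_rule :: "nat \<Rightarrow> ((nat \<Rightarrow> nat \<Rightarrow> nat) \<Rightarrow> nat) \<Rightarrow> bool" where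
  "is_majority_rule n f =
     (\<forall>\<sigma>. is_profile n 2 \<sigma> \<longrightarrow> f \<sigma> \<in> {1, 2} \<and>
        (\<forall>j\<in>{1, 2::nat}. card {i\<in>{1..n}. \<sigma> i j = 1} \<le> card {i\<in>{1..n}. \<sigma> i (f \<sigma>) = 1}))"

end

theory Submission
  imports Defs
begin

lemma kth2_1: "kth_largest 2 x (Suc 0) = max (x 1) (x 2)"
  by (simp add: kth_largest_def upt_rec numeral_2_eq_2 max_def min_def)
lemma kth2_2: "kth_largest 2 x 2 = min (x 1) (x 2)"
  by (simp add: kth_largest_def upt_rec numeral_2_eq_2 max_def min_def)

lemma alg_ineq:
  fixes x1 y1 x2 y2 x3 y3 :: real
  assumes "0 \<le> y1" "y1 \<le> x1" "0 \<le> y2" "y2 \<le> x2" "0 \<le> y3" "y3 \<le> x3"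
  defines "a \<equiv> x1 + x3 + y2" and "b \<equiv> y1 + y3 + x2"
     and "a' \<equiv> x2 + x3 + y1" and "b' \<equiv> y2 + y3 + x1"
  shows "0 \<le> (a - b) / max a b + (a' - b') / max a' b'"
proof -
  have s: "(a - b) + (a' - b') = 2 * (x3 - y3)" unfolding a_def b_def a'_def b'_def by simp
  have nn: "a \<ge> 0" "b \<ge> 0" "a' \<ge> 0" "b' \<ge> 0" using assms unfolding a_def b_def a'_def b'_def by auto
  have ab: "a' = b + (x3 - y3)" "b' = a - (x3 - y3) + 0" unfolding a_def b_def a'_def b'_def by simp_all
  show ?thesis
  proof (cases "a \<ge> b")
    case True
    then have t1: "0 \<le> (a - b) / max a b" using nn by (simp add: max_def)
    show ?thesis
    proof (cases "a' \<ge> b'")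
      case True
      then have "0 \<le> (a' - b') / max a' b'" using nn by (simp add: max_def)
      with t1 show ?thesis by linarith
    next
      case False
      have d: "x3 - y3 \<ge> 0" using assms by simp
      have "b' > 0" using False nn by linarith
      have "a > 0" using ab d `b' > 0` by linarith
      have e1: "(a - b) / max a b = (a - b) / a" using True by (simp add: max_def)
      have e2: "(a' - b') / max a' b' = (a' - b') / b'" using False by (simp add: max_def)
      have "(b' - a') * a \<le> (a - b) * b'"
      proof -
        have "(a - b) * b' - (b' - a') * a = (x3 - y3) * (a + b)"
          unfolding ab by (simp add: algebra_simps)
        moreover have "a + b \<ge> 0"
          using nn by linarith
        ultimately show ?thesis using d by (smt (verit) mult_nonneg_nonneg)
      qed
      then have "(b' - a') / b' \<le> (a - b) / a" using `b' > 0` `a > 0`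
        by (simp add: divide_simps)
      moreover have "(a' - b') / b' = - ((b' - a') / b')" by (simp add: minus_divide_left)
      ultimately show ?thesis using e1 e2 by linarith
    qed
  next
    case False
    have d: "x3 - y3 \<ge> 0" using assms by simp
    have nb: "a' \<ge> b'" using False ab d by linarith
    have "b > 0" using False nn by linarith
    have "a' > 0" using ab d `b > 0` by linarith
    have e1: "(a - b) / max a b = (a - b) / b" using False by (simp add: max_def)
    have e2: "(a' - b') / max a' b' = (a' - b') / a'" using nb by (simp add: max_def)
    have "(b - a) * a' \<le> (a' - b') * b"
    proof -
      have "(a' - b') * b - (b - a) * a' = (x3 - y3) * (2 * b - (b - a)) + 0"
        unfolding ab by (simp add: algebra_simps)
      moreover have "2 * b - (b - a) \<ge> 0" using nn by linarith
      ultimately show ?thesis using d by (smt (verit) mult_nonneg_nonneg)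
    qed
    then have "(b - a) / b \<le> (a' - b') / a'" using `b > 0` `a' > 0`
      by (simp add: divide_simps)
    moreover have "(a - b) / b = - ((b - a) / b)" by (simp add: minus_divide_left)
    ultimately show ?thesis using e1 e2 by linarith
  qed
qed

lemma split_sum:
  fixes g :: "nat \<Rightarrow> real"
  assumes "finite N" "A \<subseteq> N" "B = N - A" "inj_on h B" "h ` B \<subseteq> A"
  shows "sum g N = sum g B + (\<Sum>b\<in>B. g (h b)) + sum g (A - h ` B)"
proof -
  have fA: "finite A" using assms finite_subset by blast
  have "sum g N = sum g B + sum g A" using sum.subset_diff[OF assms(2,1)] assms(3) by simp
  also have "sum g A = sum g (h ` B) + sum g (A - h ` B)"
    using fA assms(5) by (metis add.commute sum.subset_diff)
  also have "sum g (h ` B) = (\<Sum>b\<in>B. g (h b))" using assms(4) by (simp add: sum.reindex)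
  finally show ?thesis by simp
qed

lemma pair_sums:
  fixes N A B :: "nat set" and h p :: "nat \<Rightarrow> nat" and Hf Lf :: "nat \<Rightarrow> real"
  assumes fin: "finite N" and AN: "A \<subseteq> N" and BN: "B = N - A" and inj: "inj_on h B" and hB: "h ` B \<subseteq> A"
    and p1: "\<And>b. b \<in> B \<Longrightarrow> p b = h b" and p2: "\<And>b. b \<in> B \<Longrightarrow> p (h b) = b"
    and p3: "\<And>c. c \<in> A - h ` B \<Longrightarrow> p c = c"
    and nn: "\<And>i. i \<in> N \<Longrightarrow> 0 \<le> Lf i \<and> Lf i \<le> Hf i"
  defines "P \<equiv> (\<Sum>i\<in>N. if i \<in> A then Hf i else Lf i)"
    and "Q \<equiv> (\<Sum>i\<in>N. if i \<in> A then Lf i else Hf i)"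
    and "P' \<equiv> (\<Sum>i\<in>N. if i \<in> A then Hf (p i) else Lf (p i))"
    and "Q' \<equiv> (\<Sum>i\<in>N. if i \<in> A then Lf (p i) else Hf (p i))"
  shows "0 \<le> (P - Q) / max P Q + (P' - Q') / max P' Q'" and "Q + Q' \<le> P + P'"
proof -
  define C where "C = A - h ` B"
  have BA: "\<And>b. b \<in> B \<Longrightarrow> b \<notin> A" using BN by blast
  have hA: "\<And>b. b \<in> B \<Longrightarrow> h b \<in> A" using hB by blast
  have CA: "\<And>c. c \<in> C \<Longrightarrow> c \<in> A" unfolding C_def by blast
  have BsN: "B \<subseteq> N" using BN by blast
  have CsN: "C \<subseteq> N" using AN unfolding C_def by blast
  have hN: "\<And>b. b \<in> B \<Longrightarrow> h b \<in> N" using hA AN by blast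
  note sp = split_sum[OF fin AN BN inj hB, folded C_def]
  have eP: "P = sum Lf B + (\<Sum>b\<in>B. Hf (h b)) + sum Hf C"
    unfolding P_def sp using BA hA CA by simp
  have eQ: "Q = sum Hf B + (\<Sum>b\<in>B. Lf (h b)) + sum Lf C"
    unfolding Q_def sp using BA hA CA by simp
  have eP': "P' = (\<Sum>b\<in>B. Lf (h b)) + sum Hf B + sum Hf C"
    unfolding P'_def sp using BA hA CA p1 p2 p3[folded C_def] by simp
  have eQ': "Q' = (\<Sum>b\<in>B. Hf (h b)) + sum Lf B + sum Lf C"
    unfolding Q'_def sp using BA hA CA p1 p2 p3[folded C_def] by simp
  have i1: "0 \<le> (\<Sum>b\<in>B. Lf (h b))" "(\<Sum>b\<in>B. Lf (h b)) \<le> (\<Sum>b\<in>B. Hf (h b))"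
    using nn hN by (auto intro!: sum_nonneg sum_mono)
  have i2: "0 \<le> sum Lf B" "sum Lf B \<le> sum Hf B"
    using nn BsN by (auto intro!: sum_nonneg sum_mono)
  have i3: "0 \<le> sum Lf C" "sum Lf C \<le> sum Hf C"
    using nn CsN by (auto intro!: sum_nonneg sum_mono)
  show "0 \<le> (P - Q) / max P Q + (P' - Q') / max P' Q'"
    unfolding eP eQ eP' eQ'
    using alg_ineq[OF i1 i2 i3] by (simp add: algebra_simps)
  show "Q + Q' \<le> P + P'"
    unfolding eP eQ eP' eQ' using i3 by simp
qed

lemma swap_le:
  fixes F G :: "'a \<Rightarrow> real"
  assumes T: "T \<in> measurable S S" and dT: "distr S S T = S"
    and iF: "integrable S F" and iG: "integrable S G"
    and ae: "AE x in S. G x + G (T x) \<le> F x + F (T x)"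
  shows "integral\<^sup>L S G \<le> integral\<^sup>L S F"
proof -
  have mF: "F \<in> borel_measurable S" and mG: "G \<in> borel_measurable S" using iF iG by auto
  have iFT: "integrable S (\<lambda>x. F (T x))"
    using integrable_distr_eq[OF T mF] iF dT by simp
  have iGT: "integrable S (\<lambda>x. G (T x))"
    using integrable_distr_eq[OF T mG] iG dT by simp
  have eF: "(\<integral>x. F (T x) \<partial>S) = integral\<^sup>L S F"
    using integral_distr[OF T mF] dT by simp
  have eG: "(\<integral>x. G (T x) \<partial>S) = integral\<^sup>L S G"
    using integral_distr[OF T mG] dT by simp
  have "(\<integral>x. G x + G (T x) \<partial>S) \<le> (\<integral>x. F x + F (T x) \<partial>S)"
    using ae iF iG iFT iGT by (intro integral_mono_AE) auto
  then have "integral\<^sup>L S G + integral\<^sup>L S G \<le> integral\<^sup>L S F + integral\<^sup>L S F"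
    using iF iG iFT iGT eF eG by (simp add: integral_add)
  then show ?thesis by simp
qed

lemma sw2:
  assumes "is_profile n 2 \<sigma>" "j \<in> {1, 2}"
  shows "sw n 2 \<sigma> X j = (\<Sum>i\<in>{1..n}. if \<sigma> i j = 1 then max (X (i, 1)) (X (i, 2)) else min (X (i, 1)) (X (i, 2)))"
  unfolding sw_def
proof (rule sum.cong)
  fix i assume i: "i \<in> {1..n}"
  then have "bij_betw (\<sigma> i) {1..2} {1..2}" using assms(1) unfolding is_profile_def by auto
  then have "\<sigma> i j \<in> {1..2}" using assms(2) bij_betw_apply by fastforce
  then have "\<sigma> i j = 1 \<or> \<sigma> i j = 2" by auto
  then show "utility 2 \<sigma> X i j = (if \<sigma> i j = 1 then max (X (i, 1)) (X (i, 2)) else min (X (i, 1)) (X (i, 2)))"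
    unfolding utility_def using kth2_1 kth2_2 by auto
qed simp

lemma prof2:
  assumes "is_profile n 2 \<sigma>" "i \<in> {1..n}" "w \<in> {1,2}" "j \<in> {1,2}" "w \<noteq> j"
  shows "\<sigma> i j = 1 \<longleftrightarrow> \<sigma> i w \<noteq> 1"
proof -
  have b: "bij_betw (\<sigma> i) {1..2} {1..2}" using assms(1,2) unfolding is_profile_def by auto
  then have "\<sigma> i j \<in> {1..2}" "\<sigma> i w \<in> {1..2}" using assms(3,4) bij_betw_apply by fastforce+
  moreover have "\<sigma> i j \<noteq> \<sigma> i w"
  proof -
    have "inj_on (\<sigma> i) {1..2}" using b unfolding bij_betw_def by simp
    moreover have "j \<in> {1..2}" "w \<in> {1..2}" using assms(3,4) by auto
    ultimately show ?thesis using assms(5) by (simp add: inj_on_eq_iff)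
  qed
  ultimately show ?thesis by auto
qed

lemma core:
  fixes D :: "real measure" and n :: nat and \<sigma> :: "nat \<Rightarrow> nat \<Rightarrow> nat" and w j :: nat
  assumes D: "prob_space D" and sD: "sets D = sets borel" and bD: "AE x in D. 0 \<le> x \<and> x \<le> 1"
    and prof: "is_profile n 2 \<sigma>" and w: "w \<in> {1,2}" and j: "j \<in> {1,2}" and wj: "w \<noteq> j"
    and card: "card {i\<in>{1..n}. \<sigma> i j = 1} \<le> card {i\<in>{1..n}. \<sigma> i w = 1}"
  shows "exp_dist D n 2 \<sigma> j \<le> exp_dist D n 2 \<sigma> w \<and> exp_sw D n 2 \<sigma> j \<le> exp_sw D n 2 \<sigma> w"
proof -
  define N where "N = {1..n}"
  define I where "I = N \<times> {1..2::nat}"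
  define S where "S = sample_space D n 2"
  have S_eq: "S = PiM I (\<lambda>_. D)" unfolding S_def sample_space_def I_def N_def by simp
  have finI: "finite I" unfolding I_def N_def by simp
  interpret S: prob_space S unfolding S_eq by (intro prob_space_PiM D)
  have mc: "(\<lambda>X. X idx) \<in> borel_measurable S" if "idx \<in> I" for idx
  proof -
    have "(\<lambda>X. X idx) \<in> measurable S D" unfolding S_eq using that by (rule measurable_component_singleton)
    then show ?thesis using measurable_cong_sets[OF refl sD] by blast
  qed
  have aeb: "AE X in S. \<forall>idx\<in>I. 0 \<le> X idx \<and> X idx \<le> 1"
    unfolding S_eq using finI
    by (intro eventually_ball_finite ballI AE_PiM_component[where P="\<lambda>x. 0 \<le> x \<and> x \<le> 1"] D bD) auto
  define A where "A = {i\<in>N. \<sigma> i w = 1}"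
  define B where "B = N - A"
  have AN: "A \<subseteq> N" unfolding A_def by auto
  have finN: "finite N" unfolding N_def by simp
  have Beq: "{i\<in>{1..n}. \<sigma> i j = 1} = B"
    unfolding B_def A_def N_def using prof2[OF prof _ w j wj] by auto
  have "card B \<le> card A" using card Beq unfolding A_def N_def by simp
  moreover have "finite B" "finite A" using finN AN B_def finite_subset by auto
  ultimately obtain h where hB': "h ` B \<subseteq> A" and inj: "inj_on h B"
    using card_le_inj[of B A] by blast
  define \<pi> where "\<pi> i = (if i \<in> B then h i else if i \<in> h ` B then the_inv_into B h i else i)" for i
  have p1: "\<And>b. b \<in> B \<Longrightarrow> \<pi> b = h b" unfolding \<pi>_def by simp
  have p2: "\<And>b. b \<in> B \<Longrightarrow> \<pi> (h b) = b"
  proof -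
    fix b assume b: "b \<in> B"
    then have "h b \<notin> B" using hB' unfolding B_def by auto
    then show "\<pi> (h b) = b" unfolding \<pi>_def using b inj by (simp add: the_inv_into_f_f)
  qed
  have p3: "\<And>c. c \<in> A - h ` B \<Longrightarrow> \<pi> c = c" unfolding \<pi>_def B_def by auto
  have piN: "\<pi> i \<in> N \<and> \<pi> (\<pi> i) = i" if i: "i \<in> N" for i
  proof (cases "i \<in> B")
    case True
    then show ?thesis using p1 p2 hB' AN by auto
  next
    case False
    show ?thesis
    proof (cases "i \<in> h ` B")
      case True
      then obtain b where b: "b \<in> B" "i = h b" by auto
      then show ?thesis using p1 p2 B_def by auto
    next
      case False
      with \<open>i \<notin> B\<close> have "\<pi> i = i" unfolding \<pi>_def by simp
      then show ?thesis using i by simp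
    qed
  qed
  define p where "p = (\<lambda>(i::nat, k::nat). (\<pi> i, k))"
  have p_inj: "inj_on p I"
    by (rule inj_on_inverseI[where g=p]) (auto simp: p_def I_def piN)
  have p_fun: "p \<in> I \<rightarrow> I" by (auto simp: p_def I_def piN)
  define T where "T X = (\<lambda>idx\<in>I. X (p idx))" for X :: "nat \<times> nat \<Rightarrow> real"
  have dT: "distr S S T = S"
    unfolding S_eq T_def using distr_PiM_reindex[of I "\<lambda>_. D" p I] p_inj p_fun D by simp
  have mT: "T \<in> measurable S S"
    unfolding S_eq T_def using p_fun
    by (intro measurable_restrict measurable_component_singleton) auto
  define Hm where "Hm X i = max (X (i, 1::nat)) (X (i, 2::nat))" for X :: "nat \<times> nat \<Rightarrow> real" and i
  define Lm where "Lm X i = min (X (i, 1::nat)) (X (i, 2::nat))" for X :: "nat \<times> nat \<Rightarrow> real" and i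
  define P where "P X = (\<Sum>i\<in>N. if i \<in> A then Hm X i else Lm X i)" for X
  define Q where "Q X = (\<Sum>i\<in>N. if i \<in> A then Lm X i else Hm X i)" for X
  have swP: "sw n 2 \<sigma> X w = P X" for X
    unfolding sw2[OF prof w] P_def Hm_def Lm_def A_def N_def by (intro sum.cong) auto
  have swQ: "sw n 2 \<sigma> X j = Q X" for X
    unfolding sw2[OF prof j] Q_def Hm_def Lm_def A_def N_def using prof2[OF prof _ w j wj] by (intro sum.cong) auto
  have mx: "(MAX k\<in>{1..2}. sw n 2 \<sigma> X k) = max (P X) (Q X)" for X
  proof -
    have "{1..2::nat} = {w, j}" using w j wj by auto
    then show ?thesis using swP swQ by simp
  qed
  have TX: "Hm (T X) i = Hm X (\<pi> i) \<and> Lm (T X) i = Lm X (\<pi> i)" if "i \<in> N" for X i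
    using that unfolding Hm_def Lm_def T_def p_def I_def by auto
  have PT: "P (T X) = (\<Sum>i\<in>N. if i \<in> A then Hm X (\<pi> i) else Lm X (\<pi> i))" for X
    unfolding P_def using TX by (intro sum.cong) auto
  have QT: "Q (T X) = (\<Sum>i\<in>N. if i \<in> A then Lm X (\<pi> i) else Hm X (\<pi> i))" for X
    unfolding Q_def using TX by (intro sum.cong) auto
  have HL: "0 \<le> Lm X i \<and> Lm X i \<le> Hm X i \<and> Hm X i \<le> 1"
    if "\<forall>idx\<in>I. 0 \<le> X idx \<and> X idx \<le> 1" "i \<in> N" for X i
    using that unfolding Hm_def Lm_def I_def by auto
  note ps = pair_sums[OF finN AN B_def inj hB' p1 p2 p3]
  have ae1: "AE X in S. 0 \<le> (P X - Q X) / max (P X) (Q X) + (P (T X) - Q (T X)) / max (P (T X)) (Q (T X))"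
    using aeb
  proof eventually_elim
    case (elim X)
    show ?case unfolding PT QT unfolding P_def Q_def
      by (rule ps(1)) (use HL[OF elim] in auto)
  qed
  have ae2: "AE X in S. Q X + Q (T X) \<le> P X + P (T X)"
    using aeb
  proof eventually_elim
    case (elim X)
    show ?case unfolding PT QT unfolding P_def Q_def
      by (rule ps(2)) (use HL[OF elim] in auto)
  qed
  have PQnn: "0 \<le> P X \<and> 0 \<le> Q X \<and> P X \<le> real n \<and> Q X \<le> real n"
    if "\<forall>idx\<in>I. 0 \<le> X idx \<and> X idx \<le> 1" for X
  proof -
    have "P X \<le> (\<Sum>i\<in>N. (1::real))" "Q X \<le> (\<Sum>i\<in>N. (1::real))" unfolding P_def Q_def
      using HL[OF that] by (intro sum_mono; force)+
    moreover have "0 \<le> P X" "0 \<le> Q X" unfolding P_def Q_def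
      using HL[OF that] by (intro sum_nonneg; smt (verit))+
    ultimately show ?thesis unfolding N_def by simp
  qed
  have mP: "P \<in> borel_measurable S" "Q \<in> borel_measurable S"
  proof -
    have mH: "(\<lambda>X. Hm X i) \<in> borel_measurable S \<and> (\<lambda>X. Lm X i) \<in> borel_measurable S" if "i \<in> N" for i
      using that unfolding Hm_def Lm_def
      by (auto intro!: borel_measurable_max borel_measurable_min mc simp: I_def)
    have "(\<lambda>X. if i \<in> A then Hm X i else Lm X i) \<in> borel_measurable S
        \<and> (\<lambda>X. if i \<in> A then Lm X i else Hm X i) \<in> borel_measurable S" if "i \<in> N" for i
      using mH[OF that] by (cases "i \<in> A") simp_all
    then show "P \<in> borel_measurable S" "Q \<in> borel_measurable S"
      unfolding P_def Q_def by (auto intro!: borel_measurable_sum)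
  qed
  have iP: "integrable S P" "integrable S Q"
  proof -
    have b1: "AE X in S. norm (P X) \<le> real n" "AE X in S. norm (Q X) \<le> real n"
      using aeb by (auto elim!: eventually_mono dest!: PQnn)
    show "integrable S P" using b1(1) mP(1) by (rule S.integrable_const_bound)
    show "integrable S Q" using b1(2) mP(2) by (rule S.integrable_const_bound)
  qed
  have rat: "\<bar>u / max u v\<bar> \<le> 1" if "0 \<le> u" "0 \<le> v" for u v :: real
  proof -
    have "0 \<le> u / max u v" using that by simp
    moreover have "u / max u v \<le> 1" using that by (auto simp: max_def divide_le_eq_1)
    ultimately show ?thesis by simp
  qed
  have iF: "integrable S (\<lambda>X. P X / max (P X) (Q X))" "integrable S (\<lambda>X. Q X / max (P X) (Q X))"
  proof -
    have m: "(\<lambda>X. P X / max (P X) (Q X)) \<in> borel_measurable S"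
            "(\<lambda>X. Q X / max (P X) (Q X)) \<in> borel_measurable S"
      using mP by auto
    have b1: "AE X in S. norm (P X / max (P X) (Q X)) \<le> 1"
      using aeb by (rule eventually_mono) (metis PQnn rat real_norm_def)
    have b2: "AE X in S. norm (Q X / max (P X) (Q X)) \<le> 1"
      using aeb by (rule eventually_mono) (metis PQnn rat real_norm_def max.commute)
    show "integrable S (\<lambda>X. P X / max (P X) (Q X))"
      using b1 m(1) by (rule S.integrable_const_bound)
    show "integrable S (\<lambda>X. Q X / max (P X) (Q X))"
      using b2 m(2) by (rule S.integrable_const_bound)
  qed
  have "exp_dist D n 2 \<sigma> j \<le> exp_dist D n 2 \<sigma> w"
    unfolding exp_dist_def S_def[symmetric] mx swP swQ
  proof (rule swap_le[OF mT dT iF(1) iF(2)])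
    show "AE X in S. Q X / max (P X) (Q X) + Q (T X) / max (P (T X)) (Q (T X))
       \<le> P X / max (P X) (Q X) + P (T X) / max (P (T X)) (Q (T X))"
      using ae1 by (elim eventually_mono) (simp add: diff_divide_distrib)
  qed
  moreover have "exp_sw D n 2 \<sigma> j \<le> exp_sw D n 2 \<sigma> w"
    unfolding exp_sw_def S_def[symmetric] swP swQ
    by (rule swap_le[OF mT dT iP(1) iP(2) ae2])
  ultimately show ?thesis by simp
qed

theorem theorem1:
  fixes D :: "real measure" and n :: nat and f :: "(nat \<Rightarrow> nat \<Rightarrow> nat) \<Rightarrow> nat"
  assumes "n \<ge> 1"
    and "prob_space D" and "sets D = sets borel"
    and "AE x in D. 0 \<le> x \<and> x \<le> 1"
    and "is_majority_rule n f"
  shows "exp_distortion_maximizing D n 2 f \<and> exp_welfare_maximizing D n 2 f"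
proof -
  have main: "f \<sigma> \<in> {1..2} \<and> (\<forall>j\<in>{1..2}. exp_dist D n 2 \<sigma> j \<le> exp_dist D n 2 \<sigma> (f \<sigma>)
       \<and> exp_sw D n 2 \<sigma> j \<le> exp_sw D n 2 \<sigma> (f \<sigma>))" if prof: "is_profile n 2 \<sigma>" for \<sigma>
  proof -
    have w: "f \<sigma> \<in> {1,2}" and c: "\<forall>j\<in>{1, 2::nat}. card {i\<in>{1..n}. \<sigma> i j = 1} \<le> card {i\<in>{1..n}. \<sigma> i (f \<sigma>) = 1}"
      using assms(5) prof unfolding is_majority_rule_def by auto
    have "exp_dist D n 2 \<sigma> j \<le> exp_dist D n 2 \<sigma> (f \<sigma>)
       \<and> exp_sw D n 2 \<sigma> j \<le> exp_sw D n 2 \<sigma> (f \<sigma>)" if j: "j \<in> {1..2}" for j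
    proof (cases "j = f \<sigma>")
      case True then show ?thesis by simp
    next
      case False
      have j': "j \<in> {1,2}" using j by auto
      show ?thesis
        by (rule core[OF assms(2,3,4) prof w j']) (use False c j' in auto)
    qed
    then show ?thesis using w by auto
  qed
  show ?thesis unfolding exp_distortion_maximizing_def exp_welfare_maximizing_def
    using main by blast
qed

end
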